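(* Let $G^\sigma$ be a lower-optimal oriented graph, let $y$ be a pendant vertex of $G$ with neighbor $x$, and let $H^\sigma=G^\sigma-y-x$. Then (i) $x$ does not lie on any cycle of $G$; (ii) $H^\sigma$ is lower-optimal.
   Context: An oriented graph $G^\sigma$ is obtained from a simple graph $G$ by assigning a direction to each edge. Its skew-adjacency matrix $S(G^\sigma)=[s_{x,y}]$ has $s_{x,y}=1$ if there is an arc from $x$ to $y$, $s_{x,y}=-1$ if there is an arc from $y$ to $x$, and $0$ otherwise; $sr(G^\sigma)$ is the rank of $S(G^\sigma)$. $\alpha(\cdot)$ is the independence number of the underlying graph. $d(G)=|E_G|-|V_G|+\omega(G)$, with $\omega(G)$ the number of components. For every oriented graph one has $sr(G^\sigma)+2\alpha(G)\geqslant 2|V_G|-2d(G)$, and $G^\sigma$ is called lower-optimal if equality holds. A pendant vertex has degree one. *)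

theory Defs
  imports "Jordan_Normal_Form.DL_Rank"
begin

definition oriented_graph :: "'a set \<Rightarrow> ('a \<times> 'a) set \<Rightarrow> bool" where
  "oriented_graph V A \<longleftrightarrow> finite V \<and> A \<subseteq> V \<times> V \<and>
     (\<forall>u. (u,u) \<notin> A) \<and> (\<forall>u v. (u,v) \<in> A \<longrightarrow> (v,u) \<notin> A)"

definition adj :: "('a \<times> 'a) set \<Rightarrow> 'a \<Rightarrow> 'a \<Rightarrow> bool" where
  "adj A u v \<longleftrightarrow> (u,v) \<in> A \<or> (v,u) \<in> A"

definition degree :: "'a set \<Rightarrow> ('a \<times> 'a) set \<Rightarrow> 'a \<Rightarrow> nat" where
  "degree V A u = card {v \<in> V. adj A u v}"

definition pendant :: "'a set \<Rightarrow> ('a \<times> 'a) set \<Rightarrow> 'a \<Rightarrow> bool" where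
  "pendant V A u \<longleftrightarrow> u \<in> V \<and> degree V A u = 1"

definition skew_entry :: "('a \<times> 'a) set \<Rightarrow> 'a \<Rightarrow> 'a \<Rightarrow> real" where
  "skew_entry A u v = (if (u,v) \<in> A then 1 else if (v,u) \<in> A then -1 else 0)"

definition skew_adj_mat :: "'a::linorder set \<Rightarrow> ('a \<times> 'a) set \<Rightarrow> real mat" where
  "skew_adj_mat V A = mat (card V) (card V)
     (\<lambda>(i,j). skew_entry A (sorted_list_of_set V ! i) (sorted_list_of_set V ! j))"

definition skew_rank :: "'a::linorder set \<Rightarrow> ('a \<times> 'a) set \<Rightarrow> nat" where
  "skew_rank V A = vec_space.rank (card V) (skew_adj_mat V A)"

definition independent_set :: "'a set \<Rightarrow> ('a \<times> 'a) set \<Rightarrow> 'a set \<Rightarrow> bool" where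
  "independent_set V A S \<longleftrightarrow> S \<subseteq> V \<and> (\<forall>u\<in>S. \<forall>v\<in>S. \<not> adj A u v)"

definition independence_number :: "'a set \<Rightarrow> ('a \<times> 'a) set \<Rightarrow> nat" where
  "independence_number V A = Max (card ` {S. independent_set V A S})"

definition edges :: "('a \<times> 'a) set \<Rightarrow> 'a set set" where
  "edges A = {{u, v} | u v. (u,v) \<in> A}"

definition connected_in :: "'a set \<Rightarrow> ('a \<times> 'a) set \<Rightarrow> 'a \<Rightarrow> 'a \<Rightarrow> bool" where
  "connected_in V A = (\<lambda>u v. u \<in> V \<and> v \<in> V \<and> adj A u v)\<^sup>*\<^sup>*"

definition num_components :: "'a set \<Rightarrow> ('a \<times> 'a) set \<Rightarrow> nat" where
  "num_components V A = card (V // {(u,v). u \<in> V \<and> v \<in> V \<and> connected_in V A u v})"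

definition dim_d :: "'a set \<Rightarrow> ('a \<times> 'a) set \<Rightarrow> int" where
  "dim_d V A = int (card (edges A)) - int (card V) + int (num_components V A)"

definition lower_optimal :: "'a::linorder set \<Rightarrow> ('a \<times> 'a) set \<Rightarrow> bool" where
  "lower_optimal V A \<longleftrightarrow>
     int (skew_rank V A) + 2 * int (independence_number V A) = 2 * int (card V) - 2 * dim_d V A"

definition on_cycle :: "'a set \<Rightarrow> ('a \<times> 'a) set \<Rightarrow> 'a \<Rightarrow> bool" where
  "on_cycle V A x \<longleftrightarrow> (\<exists>cs. length cs \<ge> 3 \<and> distinct cs \<and> set cs \<subseteq> V \<and> x \<in> set cs \<and>
      (\<forall>i < length cs. adj A (cs ! i) (cs ! ((i + 1) mod length cs))))"

definition del_verts_arcs :: "'a set \<Rightarrow> ('a \<times> 'a) set \<Rightarrow> 'a set \<Rightarrow> ('a \<times> 'a) set" where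
  "del_verts_arcs V A D = A \<inter> ((V - D) \<times> (V - D))"

end

theory Submission
  imports Defs
begin

lemma adj_sym: "adj A u v = adj A v u" unfolding adj_def by auto

lemma og_adj: "oriented_graph V A \<Longrightarrow> adj A u v \<Longrightarrow> u \<in> V \<and> v \<in> V \<and> u \<noteq> v"
  unfolding oriented_graph_def adj_def by auto

lemma og_del: "oriented_graph V A \<Longrightarrow> oriented_graph (V - D) (del_verts_arcs V A D)"
  unfolding oriented_graph_def del_verts_arcs_def by auto

lemma adj_del: "oriented_graph V A \<Longrightarrow> adj (del_verts_arcs V A D) u v \<longleftrightarrow> adj A u v \<and> u \<in> V - D \<and> v \<in> V - D"
  unfolding oriented_graph_def del_verts_arcs_def adj_def by auto

definition compR :: "'a set \<Rightarrow> ('a \<times> 'a) set \<Rightarrow> ('a \<times> 'a) set" where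
  "compR V A = {(u,v). u \<in> V \<and> v \<in> V \<and> connected_in V A u v}"

lemma conn_sym: "connected_in V A u v \<Longrightarrow> connected_in V A v u"
  unfolding connected_in_def
proof (induction rule: rtranclp_induct)
  case base then show ?case by simp
next
  case (step y z)
  then show ?case by (metis (mono_tags, lifting) adj_sym converse_rtranclp_into_rtranclp)
qed

lemma equiv_compR: "equiv V (compR V A)"
  unfolding equiv_def refl_on_def sym_def trans_def compR_def
  by (auto simp: connected_in_def intro: conn_sym[unfolded connected_in_def] rtranclp_trans)

lemma num_comp_alt: "num_components V A = card (V // compR V A)"
  unfolding num_components_def compR_def by simp

lemma step_del:
  assumes og: "oriented_graph V A"
  shows "(\<lambda>u w. u \<in> V - {v} \<and> w \<in> V - {v} \<and> adj (del_verts_arcs V A {v}) u w)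
       = (\<lambda>u w. u \<in> V - {v} \<and> w \<in> V - {v} \<and> adj A u w)"
  by (intro ext) (auto simp add: adj_del[OF og])

lemma conn_del_imp:
  assumes og: "oriented_graph V A"
  shows "connected_in (V - {v}) (del_verts_arcs V A {v}) a b \<Longrightarrow> connected_in V A a b"
proof -
  assume "connected_in (V - {v}) (del_verts_arcs V A {v}) a b"
  then have h: "(\<lambda>u w. u \<in> V - {v} \<and> w \<in> V - {v} \<and> adj A u w)\<^sup>*\<^sup>* a b"
    unfolding connected_in_def step_del[OF og] .
  from h show ?thesis unfolding connected_in_def
  proof (induction rule: rtranclp_induct)
    case base then show ?case by simp
  next
    case (step y z)
    have "y \<in> V \<and> z \<in> V \<and> adj A y z" using step(2) by simp
    with step(3) show ?case by (rule rtranclp.rtrancl_into_rtrancl)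
  qed
qed

lemma conn_del_step:
  assumes og: "oriented_graph V A" and c: "connected_in (V - {v}) (del_verts_arcs V A {v}) a b"
    and "adj A b c" "b \<noteq> v" "c \<noteq> v"
  shows "connected_in (V - {v}) (del_verts_arcs V A {v}) a c"
proof -
  have bc: "b \<in> V - {v} \<and> c \<in> V - {v} \<and> adj A b c" using assms og_adj[OF og \<open>adj A b c\<close>] by simp
  have c': "(\<lambda>u w. u \<in> V - {v} \<and> w \<in> V - {v} \<and> adj A u w)\<^sup>*\<^sup>* a b"
    using c unfolding connected_in_def step_del[OF og] .
  show ?thesis unfolding connected_in_def step_del[OF og]
    by (rule rtranclp.rtrancl_into_rtrancl[OF c']) (use bc in simp)
qed

lemma conn_path:
  assumes og: "oriented_graph V A" and conn: "connected_in V A u w" and u: "u \<in> V - {v}"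
  shows "(w \<noteq> v \<longrightarrow> connected_in (V-{v}) (del_verts_arcs V A {v}) u w \<or>
          ((\<exists>n1. adj A v n1 \<and> connected_in (V-{v}) (del_verts_arcs V A {v}) u n1) \<and>
           (\<exists>n2. adj A v n2 \<and> connected_in (V-{v}) (del_verts_arcs V A {v}) n2 w))) \<and>
         (w = v \<longrightarrow> (\<exists>n. adj A v n \<and> connected_in (V-{v}) (del_verts_arcs V A {v}) u n))"
  using conn[unfolded connected_in_def]
proof (induction rule: rtranclp_induct)
  case base
  have "connected_in (V-{v}) (del_verts_arcs V A {v}) u u" by (simp add: connected_in_def)
  then show ?case using u by blast
next
  case (step y z)
  let ?c = "connected_in (V-{v}) (del_verts_arcs V A {v})"
  have yz: "adj A y z" using step by auto
  show ?case
  proof (cases "y = v")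
    case True
    then have zv: "z \<noteq> v" using og_adj[OF og yz] by auto
    have czz: "?c z z" by (simp add: connected_in_def)
    obtain n where n: "adj A v n" "?c u n" using step.IH True by blast
    have avz: "adj A v z" using yz True by simp
    have "(\<exists>n1. adj A v n1 \<and> ?c u n1) \<and> (\<exists>n2. adj A v n2 \<and> ?c n2 z)"
      using n avz czz by blast
    then show ?thesis using zv by blast
  next
    case False
    show ?thesis
    proof (cases "z = v")
      case True
      have avy: "adj A v y" using yz True adj_sym by metis
      have "\<exists>n. adj A v n \<and> ?c u n"
      proof -
        have "?c u y \<or> (\<exists>n1. adj A v n1 \<and> ?c u n1)" using step.IH False by blast
        then show ?thesis using avy by blast
      qed
      then show ?thesis using True by blast
    next
      case zF: False
      have IH: "?c u y \<or> ((\<exists>n1. adj A v n1 \<and> ?c u n1) \<and> (\<exists>n2. adj A v n2 \<and> ?c n2 y))"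
        using step.IH False by blast
      have "?c u z \<or> ((\<exists>n1. adj A v n1 \<and> ?c u n1) \<and> (\<exists>n2. adj A v n2 \<and> ?c n2 z))"
        using IH conn_del_step[OF og _ yz False zF] by blast
      then show ?thesis using zF by blast
    qed
  qed
qed

lemma compR_iff: "(a,b) \<in> compR V A \<longleftrightarrow> a \<in> V \<and> b \<in> V \<and> connected_in V A a b"
  unfolding compR_def by simp

lemma comp_count_gen:
  assumes og: "oriented_graph V A" and v: "v \<in> V"
    and k: "card ((\<lambda>n. compR (V-{v}) (del_verts_arcs V A {v}) `` {n}) ` {w \<in> V. adj A v w}) \<le> k"
  shows "num_components (V-{v}) (del_verts_arcs V A {v}) + 1 \<le> num_components V A + k"
proof -
  define W where "W = V - {v}"
  define A' where "A' = del_verts_arcs V A {v}"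
  define R where "R = compR V A"
  define R' where "R' = compR W A'"
  define N where "N = {w \<in> V. adj A v w}"
  have finV: "finite V" using og unfolding oriented_graph_def by simp
  have eqR: "equiv V R" unfolding R_def by (rule equiv_compR)
  have eqR': "equiv W R'" unfolding R'_def by (rule equiv_compR)
  have R'R: "\<And>a b. (a,b) \<in> R' \<Longrightarrow> (a,b) \<in> R"
    unfolding R'_def R_def compR_iff W_def A'_def using conn_del_imp[OF og] by blast
  have NW: "N \<subseteq> W" unfolding N_def W_def using og_adj[OF og] by blast
  have key: "\<And>c d. c \<in> W \<Longrightarrow> R' `` {c} \<inter> N = {} \<Longrightarrow> (c,d) \<in> R \<Longrightarrow> d \<noteq> v \<and> (c,d) \<in> R'"
  proof -
    fix c d assume c: "c \<in> W" and disj: "R' `` {c} \<inter> N = {}" and cd: "(c,d) \<in> R"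
    have noN: "\<And>n. adj A v n \<Longrightarrow> connected_in W A' c n \<Longrightarrow> False"
    proof -
      fix n assume an: "adj A v n" and cn: "connected_in W A' c n"
      have "n \<in> N" unfolding N_def using an og_adj[OF og an] by simp
      then have "(c,n) \<in> R'" using c cn NW unfolding R'_def compR_iff by blast
      then show False using disj \<open>n \<in> N\<close> by blast
    qed
    have cc: "connected_in V A c d" and dV: "d \<in> V" using cd unfolding R_def compR_iff by auto
    note P = conn_path[OF og cc c[unfolded W_def]]
    show "d \<noteq> v \<and> (c,d) \<in> R'"
    proof (cases "d = v")
      case True
      then show ?thesis using P noN unfolding W_def A'_def by blast
    next
      case False
      then have "connected_in W A' c d" using P noN unfolding W_def A'_def by blast
      then show ?thesis using False c dV unfolding R'_def compR_iff W_def by blast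
    qed
  qed
  define Q' where "Q' = W // R'"
  define Q where "Q = V // R"
  define S2 where "S2 = {C \<in> Q'. C \<inter> N \<noteq> {}}"
  define S1 where "S1 = Q' - S2"
  have finQ': "finite Q'" unfolding Q'_def
    by (rule finite_quotient) (use finV eqR' in \<open>auto simp: W_def equiv_def refl_on_def\<close>)
  have finQ: "finite Q" unfolding Q_def
    by (rule finite_quotient) (use finV eqR in \<open>auto simp: equiv_def refl_on_def\<close>)
  have S2sub: "S2 \<subseteq> (\<lambda>n. R' `` {n}) ` N"
  proof
    fix C assume "C \<in> S2"
    then obtain c n where C: "C = R' `` {c}" "c \<in> W" and n: "n \<in> C" "n \<in> N"
      unfolding S2_def Q'_def by (auto elim!: quotientE intro: quotientI)
    have "(c,n) \<in> R'" using C n by simp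
    then have "R' `` {c} = R' `` {n}" by (rule equiv_class_eq[OF eqR'])
    then show "C \<in> (\<lambda>n. R' `` {n}) ` N" using C n by blast
  qed
  have cardS2: "card S2 \<le> k"
    using card_mono[OF finite_imageI[OF finite_subset[OF _ finV]] S2sub] k
    unfolding N_def R'_def W_def A'_def by auto
  have gC: "\<And>c. c \<in> W \<Longrightarrow> R `` (R' `` {c}) = R `` {c}"
  proof -
    fix c assume c: "c \<in> W"
    have "(c,c) \<in> R'" using eqR' c unfolding equiv_def refl_on_def by blast
    moreover have "\<And>b x. (c,b) \<in> R' \<Longrightarrow> (b,x) \<in> R \<Longrightarrow> (c,x) \<in> R"
      using R'R eqR unfolding equiv_def trans_def by blast
    ultimately show "R `` (R' `` {c}) = R `` {c}" by blast
  qed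
  have vQ: "R `` {v} \<in> Q" unfolding Q_def using v by (rule quotientI)
  have img: "(\<lambda>C. R `` C) ` S1 \<subseteq> Q - {R `` {v}}"
  proof
    fix D assume "D \<in> (\<lambda>C. R `` C) ` S1"
    then obtain c where c: "c \<in> W" "R' `` {c} \<inter> N = {}" "D = R `` (R' `` {c})"
      unfolding S1_def S2_def Q'_def by (auto elim!: quotientE intro: quotientI)
    have D: "D = R `` {c}" using gC c by simp
    have cV: "c \<in> V" using c unfolding W_def by simp
    have "D \<in> Q" unfolding D Q_def using cV by (rule quotientI)
    moreover have "D \<noteq> R `` {v}"
    proof
      assume "D = R `` {v}"
      then have "v \<in> R `` {c}" using D equiv_class_self[OF eqR v] by simp
      then show False using key[OF c(1) c(2)] by blast
    qed
    ultimately show "D \<in> Q - {R `` {v}}" by blast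
  qed
  have inj: "inj_on (\<lambda>C. R `` C) S1"
  proof
    fix C1 C2 assume C1: "C1 \<in> S1" and C2: "C2 \<in> S1" and eq: "R `` C1 = R `` C2"
    obtain c1 where c1: "c1 \<in> W" "R' `` {c1} \<inter> N = {}" "C1 = R' `` {c1}"
      using C1 unfolding S1_def S2_def Q'_def by (auto elim!: quotientE intro: quotientI)
    obtain c2 where c2: "c2 \<in> W" "C2 = R' `` {c2}"
      using C2 unfolding S1_def S2_def Q'_def by (auto elim!: quotientE intro: quotientI)
    have "R `` {c1} = R `` {c2}" using eq gC c1 c2 by simp
    then have "c2 \<in> R `` {c1}" using equiv_class_self[OF eqR] c2 unfolding W_def by auto
    then have "(c1,c2) \<in> R'" using key[OF c1(1) c1(2)] by blast
    then show "C1 = C2" using c1 c2 equiv_class_eq[OF eqR'] by simp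
  qed
  have cardS1: "card S1 \<le> card Q - 1"
  proof -
    have "card S1 = card ((\<lambda>C. R `` C) ` S1)" using inj by (simp add: card_image)
    also have "\<dots> \<le> card (Q - {R `` {v}})" using img finQ by (intro card_mono) auto
    also have "\<dots> = card Q - 1" using vQ finQ by simp
    finally show ?thesis .
  qed
  have "card Q' = card S1 + card S2"
  proof -
    have "Q' = S1 \<union> S2" "S1 \<inter> S2 = {}" unfolding S1_def S2_def by auto
    moreover have "finite S1" "finite S2" using finQ' unfolding S1_def S2_def by auto
    ultimately show ?thesis by (simp add: card_Un_disjoint)
  qed
  moreover have "card Q \<ge> 1" using vQ finQ by (metis One_nat_def Suc_leI card_gt_0_iff empty_iff)
  ultimately have "card Q' + 1 \<le> card Q + k" using cardS1 cardS2 by linarith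
  then show ?thesis unfolding num_comp_alt Q'_def Q_def R'_def R_def W_def A'_def .
qed

lemma edges_img: "edges A = (\<lambda>(u,w). {u,w}) ` A"
  unfolding edges_def by auto

lemma edges_count:
  assumes og: "oriented_graph V A" and v: "v \<in> V"
  shows "card (edges (del_verts_arcs V A {v})) + degree V A v = card (edges A)"
proof -
  have finA: "finite A" using og unfolding oriented_graph_def
    by (meson finite_SigmaI finite_subset)
  have finE: "finite (edges A)" unfolding edges_img using finA by simp
  define N where "N = {w \<in> V. adj A v w}"
  have AV: "A \<subseteq> V \<times> V" using og unfolding oriented_graph_def by simp
  have e1: "edges (del_verts_arcs V A {v}) = {e \<in> edges A. v \<notin> e}"
  proof
    show "edges (del_verts_arcs V A {v}) \<subseteq> {e \<in> edges A. v \<notin> e}"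
      unfolding edges_def del_verts_arcs_def by blast
    show "{e \<in> edges A. v \<notin> e} \<subseteq> edges (del_verts_arcs V A {v})"
    proof
      fix e assume "e \<in> {e \<in> edges A. v \<notin> e}"
      then obtain u w where uw: "e = {u,w}" "(u,w) \<in> A" "v \<notin> e" unfolding edges_def by blast
      then have "(u,w) \<in> del_verts_arcs V A {v}" using AV unfolding del_verts_arcs_def by blast
      then show "e \<in> edges (del_verts_arcs V A {v})" using uw unfolding edges_def by blast
    qed
  qed
  have e2: "{e \<in> edges A. v \<in> e} = (\<lambda>w. {v,w}) ` N"
  proof
    show "{e \<in> edges A. v \<in> e} \<subseteq> (\<lambda>w. {v,w}) ` N"
    proof
      fix e assume "e \<in> {e \<in> edges A. v \<in> e}"
      then obtain u w where uw: "e = {u,w}" "(u,w) \<in> A" "v \<in> e" unfolding edges_def by auto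
      have "u \<in> V" "w \<in> V" using uw og unfolding oriented_graph_def by auto
      then show "e \<in> (\<lambda>w. {v,w}) ` N" using uw unfolding N_def adj_def by auto
    qed
  next
    show "(\<lambda>w. {v,w}) ` N \<subseteq> {e \<in> edges A. v \<in> e}"
    proof
      fix e assume "e \<in> (\<lambda>w. {v,w}) ` N"
      then obtain w where w: "e = {v,w}" "adj A v w" unfolding N_def by auto
      then show "e \<in> {e \<in> edges A. v \<in> e}" unfolding edges_def adj_def by (auto simp: insert_commute)
    qed
  qed
  have inj: "inj_on (\<lambda>w. {v,w}) N"
    unfolding inj_on_def N_def using og_adj[OF og] by (auto simp: doubleton_eq_iff)
  have "card (edges A) = card {e \<in> edges A. v \<notin> e} + card {e \<in> edges A. v \<in> e}"
  proof -
    have "edges A = {e \<in> edges A. v \<notin> e} \<union> {e \<in> edges A. v \<in> e}" by auto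
    moreover have "finite {e \<in> edges A. v \<notin> e}" "finite {e \<in> edges A. v \<in> e}" using finE by auto
    ultimately show ?thesis by (metis (no_types, lifting) card_Un_disjoint disjoint_iff mem_Collect_eq)
  qed
  also have "card {e \<in> edges A. v \<in> e} = card N" unfolding e2 using inj by (simp add: card_image)
  finally show ?thesis unfolding e1 degree_def N_def by simp
qed

lemma d_del_gen:
  assumes og: "oriented_graph V A" and v: "v \<in> V"
    and k: "card ((\<lambda>n. compR (V-{v}) (del_verts_arcs V A {v}) `` {n}) ` {w \<in> V. adj A v w}) \<le> k"
  shows "dim_d (V-{v}) (del_verts_arcs V A {v}) \<le> dim_d V A + int k - int (degree V A v)"
proof -
  have c: "num_components (V-{v}) (del_verts_arcs V A {v}) + 1 \<le> num_components V A + k"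
    by (rule comp_count_gen[OF og v k])
  have e: "card (edges (del_verts_arcs V A {v})) + degree V A v = card (edges A)"
    by (rule edges_count[OF og v])
  have finV: "finite V" using og unfolding oriented_graph_def by simp
  have n: "card (V - {v}) + 1 = card V" using finV v
    by (metis One_nat_def Suc_pred add.commute card_Diff_singleton card_gt_0_iff empty_iff plus_1_eq_Suc)
  show ?thesis unfolding dim_d_def using c e n by linarith
qed

lemma d_del:
  assumes og: "oriented_graph V A" and v: "v \<in> V"
  shows "dim_d (V-{v}) (del_verts_arcs V A {v}) \<le> dim_d V A"
proof -
  have finV: "finite V" using og unfolding oriented_graph_def by simp
  have "card ((\<lambda>n. compR (V-{v}) (del_verts_arcs V A {v}) `` {n}) ` {w \<in> V. adj A v w}) \<le> degree V A v"
    unfolding degree_def by (rule card_image_le) (use finV in simp)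
  from d_del_gen[OF og v this] show ?thesis by simp
qed

lemma cycle_nbrs:
  assumes og: "oriented_graph V A" and cyc: "on_cycle V A v"
  shows "\<exists>a b. adj A v a \<and> adj A v b \<and> a \<noteq> b \<and> connected_in (V-{v}) (del_verts_arcs V A {v}) a b"
proof -
  obtain cs where L3: "length cs \<ge> 3" and dist: "distinct cs" and sub: "set cs \<subseteq> V"
    and vin: "v \<in> set cs" and ad: "\<And>i. i < length cs \<Longrightarrow> adj A (cs ! i) (cs ! ((i + 1) mod length cs))"
    using cyc unfolding on_cycle_def by blast
  define L where "L = length cs"
  obtain j where j: "j < L" "cs ! j = v" using vin unfolding L_def by (metis in_set_conv_nth)
  define f where "f k = cs ! ((j + k) mod L)" for k
  have L0: "L > 0" "L \<ge> 3" using L3 unfolding L_def by auto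
  have fne: "\<And>k. 0 < k \<Longrightarrow> k < L \<Longrightarrow> f k \<noteq> v"
  proof
    fix k assume k: "0 < k" "k < L" and eq: "f k = v"
    have lt: "(j + k) mod L < length cs" using L0 unfolding L_def by simp
    have jl: "j < length cs" using j unfolding L_def by simp
    have "cs ! ((j + k) mod L) = cs ! j" using eq j unfolding f_def by simp
    then have "(j + k) mod L = j" using nth_eq_iff_index_eq[OF dist lt jl] by simp
    then have "(j + k) mod L = j mod L" using j by simp
    then have "L dvd (j + k) - j" by (subst mod_eq_dvd_iff_nat[symmetric]) auto
    then have "L dvd k" by simp
    then show False using k by (meson dvd_imp_le not_le)
  qed
  have fadj: "\<And>k. adj A (f k) (f (Suc k))"
  proof -
    fix k
    have "adj A (cs ! ((j+k) mod L)) (cs ! (((j+k) mod L + 1) mod L))"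
      using ad[of "(j+k) mod L"] L0 unfolding L_def by simp
    moreover have "((j+k) mod L + 1) mod L = (j + Suc k) mod L" by (simp add: mod_Suc_eq)
    ultimately show "adj A (f k) (f (Suc k))" unfolding f_def by simp
  qed
  have chain: "\<And>k. 1 \<le> k \<Longrightarrow> k < L \<Longrightarrow> connected_in (V-{v}) (del_verts_arcs V A {v}) (f 1) (f k)"
  proof -
    fix k show "1 \<le> k \<Longrightarrow> k < L \<Longrightarrow> connected_in (V-{v}) (del_verts_arcs V A {v}) (f 1) (f k)"
    proof (induction k)
      case 0 then show ?case by simp
    next
      case (Suc k)
      show ?case
      proof (cases "k = 0")
        case True then show ?thesis by (simp add: connected_in_def)
      next
        case False
        then have IH: "connected_in (V-{v}) (del_verts_arcs V A {v}) (f 1) (f k)" using Suc by simp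
        show ?thesis
          by (rule conn_del_step[OF og IH fadj]) (use False Suc.prems fne in auto)
      qed
    qed
  qed
  have a1: "adj A v (f 1)" using fadj[of 0] j unfolding f_def by simp
  have "f (Suc (L - 1)) = v" using j L0 unfolding f_def by simp
  then have a2: "adj A v (f (L - 1))" using fadj[of "L - 1"] adj_sym by metis
  have ne: "f 1 \<noteq> f (L - 1)"
  proof
    assume "f 1 = f (L - 1)"
    moreover have lt1: "(j + 1) mod L < length cs" and lt2: "(j + (L - 1)) mod L < length cs"
      using L0 unfolding L_def by simp_all
    ultimately have "(j + 1) mod L = (j + (L - 1)) mod L"
      using nth_eq_iff_index_eq[OF dist lt1 lt2] unfolding f_def by simp
    then have "L dvd (j + (L - 1)) - (j + 1)" by (subst mod_eq_dvd_iff_nat[symmetric]) (use L0 in auto)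
    then have "L dvd L - 2" using L0 by (simp add: algebra_simps)
    then have "L \<le> L - 2" using L0 by (intro dvd_imp_le) auto
    then show False using L0 by linarith
  qed
  have "connected_in (V-{v}) (del_verts_arcs V A {v}) (f 1) (f (L - 1))"
    using chain L0 by simp
  then show ?thesis using a1 a2 ne by blast
qed

lemma d_del_cycle:
  assumes og: "oriented_graph V A" and v: "v \<in> V" and cyc: "on_cycle V A v"
  shows "dim_d (V-{v}) (del_verts_arcs V A {v}) + 1 \<le> dim_d V A"
proof -
  have finV: "finite V" using og unfolding oriented_graph_def by simp
  obtain a b where ab: "adj A v a" "adj A v b" "a \<noteq> b"
    and cab: "connected_in (V-{v}) (del_verts_arcs V A {v}) a b"
    using cycle_nbrs[OF og cyc] by blast
  define N where "N = {w \<in> V. adj A v w}"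
  define R' where "R' = compR (V-{v}) (del_verts_arcs V A {v})"
  have aN: "a \<in> N" and bN: "b \<in> N" using ab og_adj[OF og] unfolding N_def by auto
  have aW: "a \<in> V - {v}" using og_adj[OF og ab(1)] by auto
  have bW: "b \<in> V - {v}" using og_adj[OF og ab(2)] by auto
  have "(a,b) \<in> R'" unfolding R'_def compR_iff using cab aW bW by simp
  then have eqab: "R' `` {a} = R' `` {b}" unfolding R'_def by (rule equiv_class_eq[OF equiv_compR])
  have "(\<lambda>n. R' `` {n}) ` N \<subseteq> (\<lambda>n. R' `` {n}) ` (N - {a})"
  proof
    fix C assume "C \<in> (\<lambda>n. R' `` {n}) ` N"
    then obtain n where n: "n \<in> N" "C = R' `` {n}" by blast
    show "C \<in> (\<lambda>n. R' `` {n}) ` (N - {a})"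
    proof (cases "n = a")
      case True
      then have "C = R' `` {b}" using n eqab by simp
      moreover have "b \<in> N - {a}" using bN ab(3) by simp
      ultimately show ?thesis by blast
    next
      case False then show ?thesis using n by blast
    qed
  qed
  moreover have "(\<lambda>n. R' `` {n}) ` (N - {a}) \<subseteq> (\<lambda>n. R' `` {n}) ` N" by blast
  ultimately have "(\<lambda>n. R' `` {n}) ` N = (\<lambda>n. R' `` {n}) ` (N - {a})" by (rule antisym)
  then have "card ((\<lambda>n. R' `` {n}) ` N) \<le> card (N - {a})"
    using card_image_le[of "N - {a}" "\<lambda>n. R' `` {n}"] finV unfolding N_def by simp
  also have "\<dots> = degree V A v - 1" using aN finV unfolding N_def degree_def by simp
  finally have k: "card ((\<lambda>n. R' `` {n}) ` N) \<le> degree V A v - 1" .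
  have "card N > 0" using aN finV unfolding N_def by (auto simp: card_gt_0_iff)
  then have dpos: "degree V A v \<ge> 1" unfolding N_def degree_def by simp
  have "dim_d (V-{v}) (del_verts_arcs V A {v}) \<le> dim_d V A + int (degree V A v - 1) - int (degree V A v)"
    using d_del_gen[OF og v k[unfolded R'_def N_def]] .
  then show ?thesis using dpos by linarith
qed

lemma indep_fin: "oriented_graph V A \<Longrightarrow> finite {S. independent_set V A S}"
  unfolding oriented_graph_def independent_set_def
  by (rule finite_subset[of _ "Pow V"]) auto

lemma alpha_ge: "oriented_graph V A \<Longrightarrow> independent_set V A S \<Longrightarrow> card S \<le> independence_number V A"
  unfolding independence_number_def using indep_fin by (intro Max_ge) auto

lemma alpha_ex: "oriented_graph V A \<Longrightarrow> \<exists>S. independent_set V A S \<and> card S = independence_number V A"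
proof -
  assume og: "oriented_graph V A"
  have "{} \<in> {S. independent_set V A S}" unfolding independent_set_def by simp
  then have "independence_number V A \<in> card ` {S. independent_set V A S}"
    unfolding independence_number_def using indep_fin[OF og] by (intro Max_in) auto
  then show ?thesis by auto
qed

lemma alpha_del: "oriented_graph V A \<Longrightarrow> independence_number (V - D) (del_verts_arcs V A D) \<le> independence_number V A"
proof -
  assume og: "oriented_graph V A"
  obtain S where S: "independent_set (V - D) (del_verts_arcs V A D) S"
    "card S = independence_number (V - D) (del_verts_arcs V A D)"
    using alpha_ex[OF og_del[OF og]] by blast
  have "independent_set V A S" using S(1) adj_del[OF og] unfolding independent_set_def by blast
  then show ?thesis using S(2) alpha_ge[OF og] by metis
qed

lemma alpha_add:
  assumes og: "oriented_graph V A" and y: "y \<in> V" "y \<in> D" and nb: "\<And>u. adj A y u \<Longrightarrow> u \<in> D"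
  shows "independence_number (V - D) (del_verts_arcs V A D) + 1 \<le> independence_number V A"
proof -
  obtain S where S: "independent_set (V - D) (del_verts_arcs V A D) S"
    "card S = independence_number (V - D) (del_verts_arcs V A D)"
    using alpha_ex[OF og_del[OF og]] by blast
  have SV: "S \<subseteq> V - D" using S(1) unfolding independent_set_def by simp
  have finS: "finite S" using SV og unfolding oriented_graph_def by (meson finite_Diff finite_subset)
  have "independent_set V A (insert y S)"
    unfolding independent_set_def
  proof (intro conjI ballI)
    show "insert y S \<subseteq> V" using SV y by auto
    fix u w assume u: "u \<in> insert y S" and w: "w \<in> insert y S"
    show "\<not> adj A u w"
    proof
      assume a: "adj A u w"
      show False
      proof (cases "u = y")
        case True
        then have "w \<in> D" using nb a by simp
        moreover have "w \<noteq> y" using og_adj[OF og a] True by auto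
        ultimately show False using w SV by auto
      next
        case uF: False
        show False
        proof (cases "w = y")
          case True
          then have "u \<in> D" using nb a adj_sym by metis
          then show False using u uF SV by auto
        next
          case False
          then have "u \<in> S" "w \<in> S" using u w uF by auto
          then show False using S(1) a adj_del[OF og, of D u w] SV unfolding independent_set_def by blast
        qed
      qed
    qed
  qed
  moreover have "y \<notin> S" using SV y by auto
  then have "card (insert y S) = card S + 1" using finS by simp
  ultimately show ?thesis using alpha_ge[OF og] S(2) by metis
qed

lemma mult_unit_col: "(B :: 'a :: field mat) \<in> carrier_mat n k \<Longrightarrow> a < k \<Longrightarrow> B *\<^sub>v unit_vec k a = col B a"
  by (intro eq_vecI) (auto simp: scalar_prod_right_unit)

context vec_space
begin

definition subcols :: "'a mat \<Rightarrow> nat list \<Rightarrow> 'a mat" where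
  "subcols M js = mat n (length js) (\<lambda>(i,l). M $$ (i, js ! l))"

lemma subcols_carrier: "subcols M js \<in> carrier_mat n (length js)"
  unfolding subcols_def by simp

lemma cols_subcols:
  assumes M: "M \<in> carrier_mat n nc"
  shows "cols (subcols M js) = map (col M) js"
proof (rule nth_equalityI)
  show "length (cols (subcols M js)) = length (map (col M) js)" unfolding subcols_def by simp
  fix l assume "l < length (cols (subcols M js))"
  then have l: "l < length js" unfolding subcols_def by simp
  show "cols (subcols M js) ! l = map (col M) js ! l"
    using l M unfolding subcols_def by (intro eq_vecI) (auto simp: col_def)
qed

lemma rank_ge_cols:
  assumes M: "M \<in> carrier_mat n nc" and dj: "distinct js" and js: "set js \<subseteq> {..<nc}"
    and ker: "\<And>v :: 'a vec. v \<in> carrier_vec (length js) \<Longrightarrow> subcols M js *\<^sub>v v = 0\<^sub>v n \<Longrightarrow> v = 0\<^sub>v (length js)"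
  shows "length js \<le> rank M"
proof -
  define B where "B = subcols M js"
  define k where "k = length js"
  have B: "B \<in> carrier_mat n k" unfolding B_def k_def by (rule subcols_carrier)
  have dB: "distinct (cols B)"
  proof (rule ccontr)
    assume "\<not> distinct (cols B)"
    then obtain a b where ab: "a \<noteq> b" "a < length (cols B)" "b < length (cols B)" "cols B ! a = cols B ! b"
      using distinct_conv_nth by blast
    have ak: "a < k" and bk: "b < k" using ab B by auto
    have ceq: "col B a = col B b" using ab B by auto
    define v where "v = (unit_vec k a - unit_vec k b :: 'a vec)"
    have vc: "v \<in> carrier_vec k" unfolding v_def by simp
    have "B *\<^sub>v v = B *\<^sub>v unit_vec k a - B *\<^sub>v unit_vec k b"
      unfolding v_def by (rule mult_minus_distrib_mat_vec[OF B]) auto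
    also have "\<dots> = col B a - col B b" using mult_unit_col[OF B] ak bk by simp
    also have "\<dots> = 0\<^sub>v n" using ceq B by (intro eq_vecI) auto
    finally have "v = 0\<^sub>v k" using ker vc unfolding B_def k_def by blast
    moreover have "v $ a = 1" unfolding v_def using ak bk ab(1) by simp
    ultimately show False using ak by simp
  qed
  have li: "lin_indpt (set (cols B))"
  proof
    assume "lin_dep (set (cols B))"
    then obtain v where "v \<in> carrier_vec k" "v \<noteq> 0\<^sub>v k" "B *\<^sub>v v = 0\<^sub>v n"
      using lin_depE[OF B _ dB] by blast
    then show False using ker unfolding B_def k_def by blast
  qed
  have sub: "set (cols B) \<subseteq> set (cols M)"
    unfolding B_def cols_subcols[OF M] using js M by (auto simp: cols_def)
  have "card (set (cols B)) \<le> rank M" by (rule rank_ge_card_indpt[OF M sub li])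
  moreover have "card (set (cols B)) = k" using distinct_card[OF dB] B by simp
  ultimately show ?thesis unfolding k_def by simp
qed

lemma rank_witness:
  assumes M: "M \<in> carrier_mat n nc"
  shows "\<exists>js. distinct js \<and> set js \<subseteq> {..<nc} \<and> length js = rank M \<and>
    (\<forall>v :: 'a vec. v \<in> carrier_vec (length js) \<longrightarrow> subcols M js *\<^sub>v v = 0\<^sub>v n \<longrightarrow> v = 0\<^sub>v (length js))"
proof -
  have P0: "{} \<subseteq> set (cols M) \<and> lin_indpt {}" unfolding lin_dep_def by simp
  obtain S where S: "finite S" "maximal S (\<lambda>T. T \<subseteq> set (cols M) \<and> lin_indpt T)"
    using maximal_exists_superset[of "set (cols M)" "(\<lambda>T. T \<subseteq> set (cols M) \<and> lin_indpt T)" "{}"] P0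
    by blast
  have rk: "rank M = card S" by (rule rank_card_indpt[OF M S(2)])
  have SM: "S \<subseteq> set (cols M)" and liS: "lin_indpt S" using S(2) unfolding maximal_def by auto
  obtain xs where xs: "set xs = S" "distinct xs" using finite_distinct_list[OF S(1)] by blast
  define jf where "jf s = (SOME j. j < nc \<and> col M j = s)" for s
  have jf: "\<And>s. s \<in> S \<Longrightarrow> jf s < nc \<and> col M (jf s) = s"
  proof -
    fix s assume "s \<in> S"
    then have "s \<in> col M ` {0..<nc}" using SM M by (auto simp: cols_def)
    then have "\<exists>j. j < nc \<and> col M j = s" by auto
    then show "jf s < nc \<and> col M (jf s) = s" unfolding jf_def by (rule someI_ex)
  qed
  define js where "js = map jf xs"
  have mapc: "map (col M) js = xs" unfolding js_def map_map
    by (rule map_idI) (use jf xs(1) in auto)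
  have dj: "distinct js"
  proof -
    have "distinct (map (col M) js)" using mapc xs by simp
    then show ?thesis by (simp add: distinct_map)
  qed
  have sj: "set js \<subseteq> {..<nc}" unfolding js_def using jf xs(1) by auto
  have len: "length js = rank M" unfolding js_def rk using xs distinct_card by fastforce
  define B where "B = subcols M js"
  have B: "B \<in> carrier_mat n (length js)" unfolding B_def by (rule subcols_carrier)
  have cB: "cols B = xs" unfolding B_def cols_subcols[OF M] mapc ..
  have ker: "\<forall>v :: 'a vec. v \<in> carrier_vec (length js) \<longrightarrow> B *\<^sub>v v = 0\<^sub>v n \<longrightarrow> v = 0\<^sub>v (length js)"
  proof (intro allI impI)
    fix v assume v: "v \<in> carrier_vec (length js)" and Bv: "B *\<^sub>v v = 0\<^sub>v n"
    show "v = 0\<^sub>v (length js)"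
    proof (rule ccontr)
      assume "v \<noteq> 0\<^sub>v (length js)"
      then have "lin_dep (set (cols B))" using lin_depI[OF B v _ Bv] cB xs by simp
      then show False using liS cB xs by simp
    qed
  qed
  show ?thesis using dj sj len ker unfolding B_def by blast
qed

end

definition indep_cols :: "'a set \<Rightarrow> ('a \<times> 'a) set \<Rightarrow> 'a list \<Rightarrow> bool" where
  "indep_cols V A us \<longleftrightarrow> (\<forall>c::nat \<Rightarrow> real. (\<forall>w\<in>V. (\<Sum>l<length us. skew_entry A w (us!l) * c l) = 0)
      \<longrightarrow> (\<forall>l<length us. c l = 0))"

lemma skew_carrier: "skew_adj_mat V A \<in> carrier_mat (card V) (card V)"
  unfolding skew_adj_mat_def by simp

lemma skew_index: "i < card V \<Longrightarrow> j < card V \<Longrightarrow>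
  skew_adj_mat V A $$ (i,j) = skew_entry A (sorted_list_of_set V ! i) (sorted_list_of_set V ! j)"
  unfolding skew_adj_mat_def by simp

lemma subcols_mult:
  assumes v: "v \<in> carrier_vec (length js)" and i: "i < n"
  shows "(vec_space.subcols n M js *\<^sub>v v) $ i = (\<Sum>l<length js. M $$ (i, js ! l) * v $ l)"
  using v i unfolding vec_space.subcols_def
  by (simp add: scalar_prod_def lessThan_atLeast0)

lemma SR1:
  fixes V :: "'a::linorder set"
  assumes fin: "finite V" and du: "distinct us" and uV: "set us \<subseteq> V" and ind: "indep_cols V A us"
  shows "length us \<le> skew_rank V A"
proof -
  define sl where "sl = sorted_list_of_set V"
  define n where "n = card V"
  have sl: "distinct sl" "set sl = V" "length sl = n" unfolding sl_def n_def using fin by auto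
  define idx where "idx u = (SOME i. i < n \<and> sl ! i = u)" for u
  have idx: "\<And>u. u \<in> V \<Longrightarrow> idx u < n \<and> sl ! idx u = u"
  proof -
    fix u assume "u \<in> V"
    then have "\<exists>i. i < n \<and> sl ! i = u" using sl by (metis in_set_conv_nth)
    then show "idx u < n \<and> sl ! idx u = u" unfolding idx_def by (rule someI_ex)
  qed
  define js where "js = map idx us"
  have js_nth: "\<And>l. l < length us \<Longrightarrow> sl ! (js ! l) = us ! l \<and> js ! l < n"
  proof -
    fix l assume l: "l < length us"
    have "us ! l \<in> V" using uV l nth_mem by blast
    then show "sl ! (js ! l) = us ! l \<and> js ! l < n" using idx l unfolding js_def by simp
  qed
  have dj: "distinct js"
  proof -
    have "map ((!) sl) js = us" unfolding js_def map_map by (rule map_idI) (use idx uV in auto)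
    then have "distinct (map ((!) sl) js)" using du by simp
    then show ?thesis by (simp add: distinct_map)
  qed
  have sj: "set js \<subseteq> {..<n}" unfolding js_def using idx uV by auto
  define M where "M = skew_adj_mat V A"
  have M: "M \<in> carrier_mat n n" unfolding M_def n_def by (rule skew_carrier)
  have ker: "\<And>v :: real vec. v \<in> carrier_vec (length js) \<Longrightarrow> vec_space.subcols n M js *\<^sub>v v = 0\<^sub>v n \<Longrightarrow> v = 0\<^sub>v (length js)"
  proof -
    fix v :: "real vec" assume v: "v \<in> carrier_vec (length js)" and Bv: "vec_space.subcols n M js *\<^sub>v v = 0\<^sub>v n"
    have lj: "length js = length us" unfolding js_def by simp
    have "\<forall>w\<in>V. (\<Sum>l<length us. skew_entry A w (us!l) * v $ l) = 0"
    proof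
      fix w assume w: "w \<in> V"
      have "0 = (vec_space.subcols n M js *\<^sub>v v) $ idx w" using Bv idx[OF w] by simp
      also have "\<dots> = (\<Sum>l<length js. M $$ (idx w, js ! l) * v $ l)" by (rule subcols_mult[OF v]) (use idx[OF w] in simp)
      also have "\<dots> = (\<Sum>l<length us. skew_entry A w (us!l) * v $ l)"
        unfolding lj by (rule sum.cong) (use js_nth idx[OF w] in \<open>auto simp: M_def skew_index n_def sl_def\<close>)
      finally show "(\<Sum>l<length us. skew_entry A w (us!l) * v $ l) = 0" by simp
    qed
    then have "\<forall>l<length us. v $ l = 0" using ind unfolding indep_cols_def by blast
    then show "v = 0\<^sub>v (length js)" using v lj by (intro eq_vecI) auto
  qed
  have "length js \<le> vec_space.rank n M" by (rule vec_space.rank_ge_cols[OF M dj sj ker])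
  then show ?thesis unfolding skew_rank_def M_def n_def js_def by simp
qed

lemma SR2:
  fixes V :: "'a::linorder set"
  assumes fin: "finite V"
  shows "\<exists>us. distinct us \<and> set us \<subseteq> V \<and> length us = skew_rank V A \<and> indep_cols V A us"
proof -
  define sl where "sl = sorted_list_of_set V"
  define n where "n = card V"
  have sl: "distinct sl" "set sl = V" "length sl = n" unfolding sl_def n_def using fin by auto
  define M where "M = skew_adj_mat V A"
  have M: "M \<in> carrier_mat n n" unfolding M_def n_def by (rule skew_carrier)
  obtain js where dj: "distinct js" and sj: "set js \<subseteq> {..<n}" and len: "length js = vec_space.rank n M"
    and ker: "\<forall>v :: real vec. v \<in> carrier_vec (length js) \<longrightarrow> vec_space.subcols n M js *\<^sub>v v = 0\<^sub>v n \<longrightarrow> v = 0\<^sub>v (length js)"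
    using vec_space.rank_witness[OF M] by blast
  define us where "us = map ((!) sl) js"
  have du: "distinct us" unfolding us_def using dj sj sl
    by (simp add: distinct_map inj_on_nth subset_iff)
  have uV: "set us \<subseteq> V" unfolding us_def using sj sl by auto
  have ind: "indep_cols V A us"
    unfolding indep_cols_def
  proof (rule allI, rule impI)
    fix c :: "nat \<Rightarrow> real" assume h: "\<forall>w\<in>V. (\<Sum>l<length us. skew_entry A w (us!l) * c l) = 0"
    define v where "v = vec (length js) c"
    have v: "v \<in> carrier_vec (length js)" unfolding v_def by simp
    have "vec_space.subcols n M js *\<^sub>v v = 0\<^sub>v n"
    proof (rule eq_vecI)
      show "dim_vec (vec_space.subcols n M js *\<^sub>v v) = dim_vec (0\<^sub>v n)"
        unfolding vec_space.subcols_def by simp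
      fix i assume "i < dim_vec (0\<^sub>v n)"
      then have i: "i < n" by simp
      have "(vec_space.subcols n M js *\<^sub>v v) $ i = (\<Sum>l<length js. M $$ (i, js ! l) * v $ l)"
        by (rule subcols_mult[OF v i])
      also have "\<dots> = (\<Sum>l<length us. skew_entry A (sl ! i) (us!l) * c l)"
      proof (rule sum.cong)
        show "{..<length js} = {..<length us}" unfolding us_def by simp
      next
        fix l assume "l \<in> {..<length us}"
        then have l: "l < length js" unfolding us_def by simp
        then have jl: "js ! l < n" using sj nth_mem by blast
        have ul: "us ! l = sl ! (js ! l)" unfolding us_def using l by simp
        show "M $$ (i, js ! l) * v $ l = skew_entry A (sl ! i) (us ! l) * c l"
          unfolding ul using i l jl by (simp add: M_def skew_index n_def sl_def v_def)
      qed
      also have "\<dots> = 0" using h i sl by (metis nth_mem)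
      finally show "(vec_space.subcols n M js *\<^sub>v v) $ i = 0\<^sub>v n $ i" using i by simp
    qed
    then have "v = 0\<^sub>v (length js)" using ker v by blast
    then show "\<forall>l<length us. c l = 0" unfolding us_def v_def
      by (metis index_vec index_zero_vec(1) length_map)
  qed
  have "length us = skew_rank V A" unfolding us_def skew_rank_def by (simp add: len M_def n_def)
  then show ?thesis using du uV ind by blast
qed

lemma skew_entry_del: "u \<in> V - D \<Longrightarrow> w \<in> V - D \<Longrightarrow> skew_entry (del_verts_arcs V A D) u w = skew_entry A u w"
  unfolding skew_entry_def del_verts_arcs_def by auto

lemma skew_entry_zero: "\<not> adj A u w \<Longrightarrow> skew_entry A u w = 0"
  unfolding skew_entry_def adj_def by auto

lemma skew_entry_nz: "adj A u w \<Longrightarrow> skew_entry A u w \<noteq> 0"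
  unfolding skew_entry_def adj_def by auto

lemma sr_del:
  fixes V :: "'a::linorder set"
  assumes og: "oriented_graph V A"
  shows "skew_rank (V - D) (del_verts_arcs V A D) \<le> skew_rank V A"
proof -
  have fin: "finite V" using og unfolding oriented_graph_def by simp
  obtain us where us: "distinct us" "set us \<subseteq> V - D" "length us = skew_rank (V - D) (del_verts_arcs V A D)"
    "indep_cols (V - D) (del_verts_arcs V A D) us"
    using SR2[of "V - D"] fin by blast
  have "indep_cols V A us"
    unfolding indep_cols_def
  proof (rule allI, rule impI)
    fix c :: "nat \<Rightarrow> real" assume h: "\<forall>w\<in>V. (\<Sum>l<length us. skew_entry A w (us!l) * c l) = 0"
    have "\<forall>w\<in>V - D. (\<Sum>l<length us. skew_entry (del_verts_arcs V A D) w (us!l) * c l) = 0"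
    proof
      fix w assume w: "w \<in> V - D"
      have "(\<Sum>l<length us. skew_entry (del_verts_arcs V A D) w (us!l) * c l)
          = (\<Sum>l<length us. skew_entry A w (us!l) * c l)"
      proof (rule sum.cong)
        fix l assume "l \<in> {..<length us}"
        then have "us ! l \<in> V - D" using us(2) nth_mem by blast
        then show "skew_entry (del_verts_arcs V A D) w (us!l) * c l = skew_entry A w (us!l) * c l"
          using w by (simp add: skew_entry_del)
      qed simp
      then show "(\<Sum>l<length us. skew_entry (del_verts_arcs V A D) w (us!l) * c l) = 0" using h w by simp
    qed
    then show "\<forall>l<length us. c l = 0" using us(4) unfolding indep_cols_def by blast
  qed
  then have "length us \<le> skew_rank V A" using SR1[OF fin us(1)] us(2) by blast
  then show ?thesis using us(3) by simp
qed

lemma sr_pend: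
  fixes V :: "'a::linorder set"
  assumes og: "oriented_graph V A" and y: "y \<in> V" and x: "x \<in> V" and yx: "adj A y x"
    and nb: "\<And>u. adj A y u \<Longrightarrow> u = x"
  shows "skew_rank (V - {y,x}) (del_verts_arcs V A {y,x}) + 2 \<le> skew_rank V A"
proof -
  have fin: "finite V" using og unfolding oriented_graph_def by simp
  have xy: "x \<noteq> y" using og_adj[OF og yx] by auto
  define D where "D = {y,x}"
  obtain us where us: "distinct us" "set us \<subseteq> V - D" "length us = skew_rank (V - D) (del_verts_arcs V A D)"
    "indep_cols (V - D) (del_verts_arcs V A D) us"
    using SR2[of "V - D"] fin by blast
  define m where "m = length us"
  define us' where "us' = x # y # us"
  have du': "distinct us'" unfolding us'_def using us(1,2) xy unfolding D_def by auto
  have uV': "set us' \<subseteq> V" unfolding us'_def using us(2) x y by auto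
  have sum_split: "(\<Sum>l<length us'. f l) = f 0 + f 1 + (\<Sum>l<m. f (Suc (Suc l)))" for f :: "nat \<Rightarrow> real"
  proof -
    have "(\<Sum>l<length us'. f l) = (\<Sum>l<Suc (Suc m). f l)" unfolding us'_def m_def by simp
    also have "\<dots> = f 0 + (f (Suc 0) + (\<Sum>l<m. f (Suc (Suc l))))"
      by (simp only: sum.lessThan_Suc_shift)
    finally show ?thesis by simp
  qed
  have usnb: "\<And>l. l < m \<Longrightarrow> us ! l \<in> V - D" using us(2) nth_mem unfolding m_def by blast
  have "indep_cols V A us'"
    unfolding indep_cols_def
  proof (rule allI, rule impI)
    fix c :: "nat \<Rightarrow> real" assume h: "\<forall>w\<in>V. (\<Sum>l<length us'. skew_entry A w (us'!l) * c l) = 0"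
    have h2: "\<And>w. w \<in> V \<Longrightarrow> skew_entry A w x * c 0 + skew_entry A w y * c 1
        + (\<Sum>l<m. skew_entry A w (us ! l) * c (Suc (Suc l))) = 0"
      using h unfolding sum_split unfolding us'_def by simp
    have c0: "c 0 = 0"
    proof -
      have "(\<Sum>l<m. skew_entry A y (us ! l) * c (Suc (Suc l))) = 0"
      proof (rule sum.neutral, rule ballI)
        fix l assume "l \<in> {..<m}"
        then have "us ! l \<noteq> x" using usnb unfolding D_def by auto
        then have "\<not> adj A y (us ! l)" using nb by blast
        then show "skew_entry A y (us ! l) * c (Suc (Suc l)) = 0" by (simp add: skew_entry_zero)
      qed
      moreover have "skew_entry A y y = 0" using og_adj[OF og] by (metis skew_entry_zero)
      ultimately have "skew_entry A y x * c 0 = 0" using h2[OF y] by simp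
      then show ?thesis using skew_entry_nz[OF yx] by simp
    qed
    have rest: "\<forall>w\<in>V - D. (\<Sum>l<m. skew_entry (del_verts_arcs V A D) w (us!l) * c (Suc (Suc l))) = 0"
    proof
      fix w assume w: "w \<in> V - D"
      have "skew_entry A w y = 0"
      proof (rule skew_entry_zero)
        show "\<not> adj A w y" using nb w adj_sym unfolding D_def by fastforce
      qed
      then have "(\<Sum>l<m. skew_entry A w (us ! l) * c (Suc (Suc l))) = 0" using h2[of w] w c0 by simp
      moreover have "(\<Sum>l<m. skew_entry (del_verts_arcs V A D) w (us!l) * c (Suc (Suc l)))
          = (\<Sum>l<m. skew_entry A w (us!l) * c (Suc (Suc l)))"
        by (rule sum.cong) (use w usnb in \<open>auto simp: skew_entry_del\<close>)
      ultimately show "(\<Sum>l<m. skew_entry (del_verts_arcs V A D) w (us!l) * c (Suc (Suc l))) = 0" by simp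
    qed
    have cl: "\<And>l. l < m \<Longrightarrow> c (Suc (Suc l)) = 0"
    proof -
      fix l assume l: "l < m"
      have "\<forall>w\<in>V - D. (\<Sum>l<length us. skew_entry (del_verts_arcs V A D) w (us!l) * (\<lambda>l. c (Suc (Suc l))) l) = 0"
        using rest unfolding m_def by simp
      then have "\<forall>l<length us. (\<lambda>l. c (Suc (Suc l))) l = 0"
        using us(4)[unfolded indep_cols_def, rule_format, of "\<lambda>l. c (Suc (Suc l))"] by blast
      then show "c (Suc (Suc l)) = 0" using l unfolding m_def by simp
    qed
    have c1: "c 1 = 0"
    proof -
      have "(\<Sum>l<m. skew_entry A x (us ! l) * c (Suc (Suc l))) = 0" using cl by simp
      moreover have "skew_entry A x x = 0" using og_adj[OF og] by (metis skew_entry_zero)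
      ultimately have "skew_entry A x y * c 1 = 0" using h2[OF x] c0 by simp
      moreover have "adj A x y" using yx adj_sym by metis
      ultimately show ?thesis using skew_entry_nz[of A x y] by simp
    qed
    show "\<forall>l<length us'. c l = 0"
    proof (intro allI impI)
      fix l assume l: "l < length us'"
      show "c l = 0"
      proof (cases "l < 2")
        case True then show ?thesis using c0 c1 by (cases l) auto
      next
        case False
        then obtain k where k: "l = Suc (Suc k)" by (metis add_2_eq_Suc le_add_diff_inverse not_less)
        then have "k < m" using l unfolding us'_def m_def by simp
        then show ?thesis using cl[of k] k by simp
      qed
    qed
  qed
  then have "length us' \<le> skew_rank V A" by (rule SR1[OF fin du' uV'])
  then show ?thesis using us(3) unfolding us'_def D_def by simp
qed

lemma special_vertex:
  assumes og: "oriented_graph V A" and ne: "V \<noteq> {}"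
  shows "\<exists>u\<in>V. degree V A u = 0 \<or> degree V A u = 1 \<or> on_cycle V A u"
proof -
  have fin: "finite V" using og unfolding oriented_graph_def by simp
  define P where "P p \<longleftrightarrow> p \<noteq> [] \<and> distinct p \<and> set p \<subseteq> V \<and> (\<forall>i. Suc i < length p \<longrightarrow> adj A (p!i) (p!Suc i))"
    for p
  obtain v0 where v0: "v0 \<in> V" using ne by blast
  have P0: "P [v0]" unfolding P_def using v0 by simp
  have bnd: "\<forall>p. P p \<longrightarrow> length p < Suc (card V)"
  proof (intro allI impI)
    fix p assume "P p"
    then have "length p = card (set p)" "set p \<subseteq> V" unfolding P_def by (auto simp: distinct_card)
    then show "length p < Suc (card V)" using card_mono[OF fin] by (metis le_imp_less_Suc)
  qed
  obtain p where Pp: "P p" and maxp: "\<forall>q. P q \<longrightarrow> length q \<le> length p"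
    using ex_has_greatest_nat[of P "[v0]" length "Suc (card V)", OF P0 bnd] by blast
  have pne: "p \<noteq> []" and dp: "distinct p" and pV: "set p \<subseteq> V"
    and padj: "\<And>i. Suc i < length p \<Longrightarrow> adj A (p!i) (p!Suc i)" using Pp unfolding P_def by auto
  define u where "u = p ! 0"
  have uV: "u \<in> V" unfolding u_def using pne pV by auto
  define N where "N = {w \<in> V. adj A u w}"
  have Nsub: "N \<subseteq> set p"
  proof
    fix w assume w: "w \<in> N"
    show "w \<in> set p"
    proof (rule ccontr)
      assume nw: "w \<notin> set p"
      have "P (w # p)" unfolding P_def
      proof (intro conjI allI impI)
        show "w # p \<noteq> []" by simp
        show "distinct (w # p)" using dp nw by simp
        show "set (w # p) \<subseteq> V" using pV w unfolding N_def by auto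
        fix i assume i: "Suc i < length (w # p)"
        show "adj A ((w # p) ! i) ((w # p) ! Suc i)"
        proof (cases i)
          case 0
          then show ?thesis using w adj_sym[of A w "p ! 0"] unfolding N_def u_def by auto
        next
          case (Suc j)
          then show ?thesis using padj[of j] i by simp
        qed
      qed
      then show False using maxp by fastforce
    qed
  qed
  show ?thesis
  proof (cases "degree V A u \<le> 1")
    case True
    then have "degree V A u = 0 \<or> degree V A u = 1" by linarith
    then show ?thesis using uV by blast
  next
    case False
    then have cN: "card N \<ge> 2" unfolding N_def degree_def by simp
    have uN: "u \<notin> N" unfolding N_def using og_adj[OF og] by blast
    have lp: "length p \<ge> 2"
    proof (rule ccontr)
      assume "\<not> length p \<ge> 2"
      then have "length p = 1" using pne by (metis One_nat_def Suc_1 le_SucE length_greater_0_conv less_Suc_eq_le not_less)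
      then have "set p = {u}" unfolding u_def by (cases p) auto
      then have "N = {}" using Nsub uN by auto
      then show False using cN by simp
    qed
    have p1: "p ! 1 \<in> N" unfolding N_def using padj[of 0] lp pV nth_mem unfolding u_def
      by (metis One_nat_def Suc_1 Suc_le_lessD mem_Collect_eq subsetD)
    have finN: "finite N" unfolding N_def using fin by simp
    have "card (N - {p ! 1}) \<ge> 1" using cN p1 finN by simp
    then obtain w where w: "w \<in> N" "w \<noteq> p ! 1" by (metis Diff_iff One_nat_def card_0_eq empty_iff finN finite_Diff not_one_le_zero subsetI subset_empty singletonI)
    obtain j where j: "j < length p" "p ! j = w" using Nsub w(1) by (metis in_set_conv_nth subsetD)
    have j0: "j \<noteq> 0"
    proof
      assume "j = 0"
      then have "w = u" using j unfolding u_def by simp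
      then show False using w(1) uN by simp
    qed
    have j1: "j \<noteq> 1" using j w(2) by auto
    define cs where "cs = take (Suc j) p"
    have lcs: "length cs = Suc j" unfolding cs_def using j by simp
    have "on_cycle V A u"
      unfolding on_cycle_def
    proof (intro exI conjI allI impI)
      show "3 \<le> length cs" using lcs j0 j1 by simp
      show "distinct cs" unfolding cs_def using dp by simp
      show "set cs \<subseteq> V" unfolding cs_def using pV set_take_subset by fastforce
      show "u \<in> set cs"
      proof -
        have "cs ! 0 = u" unfolding cs_def u_def by simp
        moreover have "0 < length cs" using lcs by simp
        ultimately show ?thesis by (metis nth_mem)
      qed
      fix i assume i: "i < length cs"
      show "adj A (cs ! i) (cs ! ((i + 1) mod length cs))"
      proof (cases "i = j")
        case True
        then have "(i + 1) mod length cs = 0" using lcs by simp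
        then show ?thesis using True j w(1) adj_sym[of A w "p ! 0"] unfolding cs_def N_def u_def by (simp add: nth_take)
      next
        case False
        then have ij: "i < j" using i lcs by simp
        then have "(i + 1) mod length cs = Suc i" using lcs by simp
        then show ?thesis using padj[of i] ij j unfolding cs_def by (simp add: nth_take)
      qed
    qed
    then show ?thesis using uV by blast
  qed
qed

lemma del_twice:
  "del_verts_arcs (V - {y}) (del_verts_arcs V A {y}) {x} = del_verts_arcs V A {y,x}"
  "V - {y} - {x} = V - {y,x}"
  unfolding del_verts_arcs_def by auto

lemma dim_d_nonneg: "finite V \<Longrightarrow> V = {} \<Longrightarrow> dim_d V A \<ge> 0"
  unfolding dim_d_def by simp

lemma pend_nb:
  assumes og: "oriented_graph V A" and p: "degree V A y = 1" and x: "adj A y x"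
  shows "\<And>u. adj A y u \<Longrightarrow> u = x"
proof -
  fix u assume u: "adj A y u"
  obtain z where z: "{w \<in> V. adj A y w} = {z}" using p unfolding degree_def by (rule card_1_singletonE)
  have "x \<in> {w \<in> V. adj A y w}" "u \<in> {w \<in> V. adj A y w}" using x u og_adj[OF og] by auto
  then show "u = x" using z by auto
qed

lemma card_del2:
  assumes fin: "finite V" and y: "y \<in> V" and x: "x \<in> V" and xy: "x \<noteq> y"
  shows "int (card (V - {y,x})) + 2 = int (card V)"
proof -
  have "card (V - {y,x}) = card V - card {y,x}" using fin x y by (intro card_Diff_subset) auto
  moreover have "card {y,x} = 2" using xy by simp
  moreover have "card V \<ge> 2" using fin x y xy
    by (metis \<open>card {y, x} = 2\<close> card_mono empty_subsetI insert_subset)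
  ultimately show ?thesis by simp
qed

lemma card_del1:
  assumes fin: "finite V" and y: "y \<in> V"
  shows "int (card (V - {y})) + 1 = int (card V)"
proof -
  have "card V > 0" using fin y card_gt_0_iff by blast
  then show ?thesis using fin y by simp
qed

lemma lower_bound:
  fixes V :: "'a::linorder set"
  assumes "oriented_graph V A"
  shows "2 * int (card V) - 2 * dim_d V A \<le> int (skew_rank V A) + 2 * int (independence_number V A)"
  using assms
proof (induction "card V" arbitrary: V A rule: less_induct)
  case less
  note og = less.prems
  have fin: "finite V" using og unfolding oriented_graph_def by simp
  show ?case
  proof (cases "V = {}")
    case True
    have "dim_d V A \<ge> 0" by (rule dim_d_nonneg[OF fin True])
    moreover have "card V = 0" using True by simp
    ultimately show ?thesis by linarith
  next
    case False
    then obtain u where u: "u \<in> V" and cs: "degree V A u = 0 \<or> degree V A u = 1 \<or> on_cycle V A u"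
      using special_vertex[OF og] by blast
    have c1: "int (card (V - {u})) + 1 = int (card V)" by (rule card_del1[OF fin u])
    have og1: "oriented_graph (V - {u}) (del_verts_arcs V A {u})" by (rule og_del[OF og])
    have lt1: "card (V - {u}) < card V" using c1 by simp
    note IH1 = less.hyps[OF lt1 og1]
    have sr1: "skew_rank (V - {u}) (del_verts_arcs V A {u}) \<le> skew_rank V A" by (rule sr_del[OF og])
    have d1: "dim_d (V - {u}) (del_verts_arcs V A {u}) \<le> dim_d V A" by (rule d_del[OF og u])
    show ?thesis
    proof (cases "degree V A u = 0")
      case True
      have "\<And>w. adj A u w \<Longrightarrow> w \<in> {u}"
      proof -
        fix w assume w: "adj A u w"
        then have "w \<in> {w \<in> V. adj A u w}" using og_adj[OF og w] by simp
        then show "w \<in> {u}" using True fin unfolding degree_def by auto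
      qed
      then have a1: "independence_number (V - {u}) (del_verts_arcs V A {u}) + 1 \<le> independence_number V A"
        using alpha_add[OF og u] by simp
      show ?thesis using IH1 sr1 d1 a1 c1 by linarith
    next
      case nz: False
      show ?thesis
      proof (cases "degree V A u = 1")
        case True
        obtain x where xs: "{w \<in> V. adj A u w} = {x}" using True unfolding degree_def by (rule card_1_singletonE)
        then have ux: "adj A u x" and x: "x \<in> V" by auto
        have nb: "\<And>w. adj A u w \<Longrightarrow> w = x" by (rule pend_nb[OF og True ux])
        have xu: "x \<noteq> u" using og_adj[OF og ux] by auto
        have c2: "int (card (V - {u,x})) + 2 = int (card V)" by (rule card_del2[OF fin u x xu])
        have og2: "oriented_graph (V - {u,x}) (del_verts_arcs V A {u,x})" by (rule og_del[OF og])
        have lt2: "card (V - {u,x}) < card V" using c2 by simp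
        note IH2 = less.hyps[OF lt2 og2]
        have sr2: "skew_rank (V - {u,x}) (del_verts_arcs V A {u,x}) + 2 \<le> skew_rank V A"
          by (rule sr_pend[OF og u x ux nb])
        have a2: "independence_number (V - {u,x}) (del_verts_arcs V A {u,x}) + 1 \<le> independence_number V A"
          by (rule alpha_add[OF og u]) (use nb in auto)
        have "dim_d (V - {u} - {x}) (del_verts_arcs (V - {u}) (del_verts_arcs V A {u}) {x}) \<le> dim_d (V - {u}) (del_verts_arcs V A {u})"
          by (rule d_del[OF og1]) (use x xu in simp)
        then have d2: "dim_d (V - {u,x}) (del_verts_arcs V A {u,x}) \<le> dim_d V A"
          using d1 unfolding del_twice by simp
        show ?thesis using IH2 sr2 d2 a2 c2 by linarith
      next
        case False
        then have cyc: "on_cycle V A u" using cs nz by simp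
        have d3: "dim_d (V - {u}) (del_verts_arcs V A {u}) + 1 \<le> dim_d V A" by (rule d_del_cycle[OF og u cyc])
        have a3: "independence_number (V - {u}) (del_verts_arcs V A {u}) \<le> independence_number V A"
          by (rule alpha_del[OF og])
        show ?thesis using IH1 sr1 d3 a3 c1 by linarith
      qed
    qed
  qed
qed

lemma cycle_avoid:
  assumes og: "oriented_graph V A" and cyc: "on_cycle V A x" and xy: "x \<noteq> y"
    and nb: "\<And>u. adj A y u \<Longrightarrow> u = x"
  shows "on_cycle (V - {y}) (del_verts_arcs V A {y}) x"
proof -
  obtain cs where L3: "length cs \<ge> 3" and dist: "distinct cs" and sub: "set cs \<subseteq> V"
    and xin: "x \<in> set cs" and ad: "\<forall>i < length cs. adj A (cs ! i) (cs ! ((i + 1) mod length cs))"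
    using cyc unfolding on_cycle_def by blast
  have yn: "y \<notin> set cs"
  proof
    assume "y \<in> set cs"
    then have "on_cycle V A y" unfolding on_cycle_def using L3 dist sub ad by (intro exI[of _ cs]) simp
    then obtain a b where ab: "adj A y a" "adj A y b" "a \<noteq> b"
      using cycle_nbrs[OF og] by blast
    have "a = x" by (rule nb[OF ab(1)])
    moreover have "b = x" by (rule nb[OF ab(2)])
    ultimately show False using ab(3) by simp
  qed
  have sub': "set cs \<subseteq> V - {y}" using sub yn by blast
  have ad': "\<forall>i < length cs. adj (del_verts_arcs V A {y}) (cs ! i) (cs ! ((i + 1) mod length cs))"
  proof (intro allI impI)
    fix i assume i: "i < length cs"
    have "cs ! i \<in> V - {y}" using sub' i nth_mem by blast
    moreover have "(i + 1) mod length cs < length cs" using L3 by (intro mod_less_divisor) linarith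
    then have "cs ! ((i + 1) mod length cs) \<in> V - {y}" using sub' nth_mem by blast
    moreover have "adj A (cs ! i) (cs ! ((i + 1) mod length cs))" using ad i by blast
    ultimately show "adj (del_verts_arcs V A {y}) (cs ! i) (cs ! ((i + 1) mod length cs))"
      using adj_del[OF og] by blast
  qed
  show ?thesis unfolding on_cycle_def using L3 dist sub' xin ad' by (intro exI[of _ cs]) simp
qed

theorem lemma2p6:
  fixes V :: "'a::linorder set" and A :: "('a \<times> 'a) set" and x y :: 'a
  assumes "oriented_graph V A"
    and "lower_optimal V A"
    and "pendant V A y"
    and "x \<in> V" and "adj A y x"
  shows "\<not> on_cycle V A x \<and>
         lower_optimal (V - {y, x}) (del_verts_arcs V A {y, x})"
proof -
  note og = assms(1)
  have y: "y \<in> V" and dy: "degree V A y = 1" using assms(3) unfolding pendant_def by auto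
  note x = assms(4) and yx = assms(5)
  have fin: "finite V" using og unfolding oriented_graph_def by simp
  have nb: "\<And>u. adj A y u \<Longrightarrow> u = x" by (rule pend_nb[OF og dy yx])
  have xy: "x \<noteq> y" using og_adj[OF og yx] by auto
  have c2: "int (card (V - {y,x})) + 2 = int (card V)" by (rule card_del2[OF fin y x xy])
  have og2: "oriented_graph (V - {y,x}) (del_verts_arcs V A {y,x})" by (rule og_del[OF og])
  have LB: "2 * int (card (V - {y,x})) - 2 * dim_d (V - {y,x}) (del_verts_arcs V A {y,x})
      \<le> int (skew_rank (V - {y,x}) (del_verts_arcs V A {y,x})) + 2 * int (independence_number (V - {y,x}) (del_verts_arcs V A {y,x}))"
    by (rule lower_bound[OF og2])
  have sr2: "skew_rank (V - {y,x}) (del_verts_arcs V A {y,x}) + 2 \<le> skew_rank V A"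
    by (rule sr_pend[OF og y x yx nb])
  have a2: "independence_number (V - {y,x}) (del_verts_arcs V A {y,x}) + 1 \<le> independence_number V A"
    by (rule alpha_add[OF og y]) (use nb in auto)
  have og1: "oriented_graph (V - {y}) (del_verts_arcs V A {y})" by (rule og_del[OF og])
  have d1: "dim_d (V - {y}) (del_verts_arcs V A {y}) \<le> dim_d V A" by (rule d_del[OF og y])
  have xV1: "x \<in> V - {y}" using x xy by simp
  have "dim_d (V - {y} - {x}) (del_verts_arcs (V - {y}) (del_verts_arcs V A {y}) {x}) \<le> dim_d (V - {y}) (del_verts_arcs V A {y})"
    by (rule d_del[OF og1 xV1])
  then have d2: "dim_d (V - {y,x}) (del_verts_arcs V A {y,x}) \<le> dim_d V A"
    using d1 unfolding del_twice by simp
  have LO: "int (skew_rank V A) + 2 * int (independence_number V A) = 2 * int (card V) - 2 * dim_d V A"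
    using assms(2) unfolding lower_optimal_def .
  have ncyc: "\<not> on_cycle V A x"
  proof
    assume cyc: "on_cycle V A x"
    have "on_cycle (V - {y}) (del_verts_arcs V A {y}) x" by (rule cycle_avoid[OF og cyc xy nb])
    then have "dim_d (V - {y} - {x}) (del_verts_arcs (V - {y}) (del_verts_arcs V A {y}) {x}) + 1 \<le> dim_d (V - {y}) (del_verts_arcs V A {y})"
      by (rule d_del_cycle[OF og1 xV1])
    then have "dim_d (V - {y,x}) (del_verts_arcs V A {y,x}) + 1 \<le> dim_d V A"
      using d1 unfolding del_twice by simp
    then show False using LB sr2 a2 c2 LO by linarith
  qed
  have "lower_optimal (V - {y, x}) (del_verts_arcs V A {y, x})"
    unfolding lower_optimal_def using LB sr2 a2 c2 LO d2 by linarith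
  then show ?thesis using ncyc by blast
qed

end
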